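(* Suppose A1–A3 hold and that $\nu_k\to0$. Let $C>0$ be such that $\nu_k\le C$ for all $k$, and for each $\delta>0$ let $k_0(\delta)$ be a positive integer such that $\nu_k\le\delta$ for all $k\ge k_0(\delta)$. Let $\{x_k\}$ be generated by Algorithm 1, let $\epsilon>0$ and $\delta=\kappa_c\epsilon^2/2$. If $T$ is a positive integer with $$T\ge\max\left\{\frac{2k_0(\delta/2)C}{\delta},\ 1+k_0(\delta/2),\ \frac{2(f(x_0)-f_{low})}{\kappa_c\epsilon^2}\right\},$$ then $\min_{k=0,\dots,T-1}\|\nabla f(x_k)\|\le\epsilon$. In particular, if $M>0$ is a constant, $0\le\nu_0\le M$ and $\nu_k=M/k$ for all $k\ge1$, then $\min_{k=0,\dots,T-1}\|\nabla f(x_k)\|\le\epsilon$ holds whenever $$T\ge\max\left\{\frac{16M^2}{\kappa_c^2\epsilon^4},\ 1+\frac{4M}{\kappa_c\epsilon^2},\ \frac{2(f(x_0)-f_{low})}{\kappa_c\epsilon^2}\right\}.$$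
   Context: Let $(X,\langle\cdot,\cdot\rangle)$ be a real Hilbert space with induced norm $\|\cdot\|$, and $f:X\to\mathbb{R}$ Fréchet differentiable with gradient $\nabla f$. Algorithm 1 (general non-monotone descent algorithm): parameters $x_0\in X$, $\alpha_0>0$, $\beta,\rho\in(0,1)$. For $k=0,1,2,\dots$: choose $d_k\in X$ with $\langle\nabla f(x_k),d_k\rangle<0$; then for $l=0,1,2,\dots$ choose a number $\nu_{k,l}\ge 0$ and test $$f(x_k+\alpha_k\beta^l d_k)\le f(x_k)+\rho\alpha_k\beta^l\langle\nabla f(x_k),d_k\rangle+\nu_{k,l};$$ let $l_k$ be the first $l$ for which this holds, set $\nu_k:=\nu_{k,l_k}$, $x_{k+1}=x_k+\alpha_k\beta^{l_k}d_k$ and $\alpha_{k+1}=\alpha_k\beta^{l_k-1}$. It is assumed the algorithm generates infinite sequences (all $l_k$ finite). Assumptions: A1: $\nabla f$ is Lipschitz continuous with constant $L>0$. A2: there is $f_{low}\in\mathbb{R}$ with $f(x)\ge f_{low}$ for all $x\in X$. A3: there are constants $c_1,c_2>0$ with $\langle\nabla f(x_k),d_k\rangle\le -c_1\|\nabla f(x_k)\|^2$ and $\|d_k\|\le c_2\|\nabla f(x_k)\|$ for all $k$. Constant: $\kappa_c=\min\left\{\rho\beta\alpha_0c_1,\ \frac{2\beta\rho(1-\rho)c_1^2}{Lc_2^2}\right\}$. *)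

theory Defs
  imports "HOL-Analysis.Analysis"
begin

definition kappa_c :: "real \<Rightarrow> real \<Rightarrow> real \<Rightarrow> real \<Rightarrow> real \<Rightarrow> real \<Rightarrow> real" where
  "kappa_c \<rho> \<beta> \<alpha>0 c1 c2 L =
     min (\<rho> * \<beta> * \<alpha>0 * c1) (2 * \<beta> * \<rho> * (1 - \<rho>) * c1^2 / (L * c2^2))"

end

theory Submission
  imports Defs
begin

lemma descent_lemma:
  fixes f :: "'a::real_inner \<Rightarrow> real" and grad :: "'a \<Rightarrow> 'a"
  assumes deriv: "\<And>z. (f has_derivative (\<lambda>h. inner (grad z) h)) (at z)"
    and lip: "\<And>u v. norm (grad u - grad v) \<le> L * norm (u - v)"
    and s: "s \<ge> 0"
  shows "f (x + s *\<^sub>R d) \<le> f x + s * inner (grad x) d + L/2 * s^2 * (norm d)^2"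
proof -
  define \<phi> where "\<phi> t = f (x + t *\<^sub>R d) - t * inner (grad x) d - L/2 * t^2 * (norm d)^2" for t
  have H: "((\<lambda>t. f (x + t *\<^sub>R d)) has_real_derivative inner (grad (x + t *\<^sub>R d)) d) (at t)" for t
  proof -
    have 1: "((\<lambda>t. x + t *\<^sub>R d) has_derivative (\<lambda>h. h *\<^sub>R d)) (at t)"
      by (auto intro!: derivative_eq_intros)
    have "((\<lambda>t. f (x + t *\<^sub>R d)) has_derivative (\<lambda>h. inner (grad (x + t *\<^sub>R d)) (h *\<^sub>R d))) (at t)"
      by (rule has_derivative_compose[OF 1 deriv])
    then show ?thesis unfolding has_field_derivative_def
      by (simp add: mult.commute[of _ "inner _ _"])
  qed
  have D: "(\<phi> has_real_derivative (inner (grad (x + t *\<^sub>R d)) d - inner (grad x) d - L * t * (norm d)^2)) (at t)" for t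
    unfolding \<phi>_def
    by (rule H[THEN DERIV_diff, THEN DERIV_diff, THEN DERIV_cong]) (auto intro!: derivative_eq_intros)
  have "\<phi> s \<le> \<phi> 0"
  proof (rule DERIV_nonpos_imp_nonincreasing[OF s])
    fix t assume t: "0 \<le> t" "t \<le> s"
    have "inner (grad (x + t *\<^sub>R d)) d - inner (grad x) d = inner (grad (x + t *\<^sub>R d) - grad x) d"
      by (simp add: inner_diff_left)
    also have "\<dots> \<le> norm (grad (x + t *\<^sub>R d) - grad x) * norm d"
      by (rule norm_cauchy_schwarz)
    also have "\<dots> \<le> L * norm (t *\<^sub>R d) * norm d"
      using lip[of "x + t *\<^sub>R d" x] by (simp add: mult_right_mono)
    also have "\<dots> = L * t * (norm d)^2" using t by (simp add: power2_eq_square)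
    finally show "\<exists>y. DERIV \<phi> t :> y \<and> y \<le> 0" using D[of t] by auto
  qed
  then show ?thesis unfolding \<phi>_def by simp
qed
lemma tri3: "(s::real) \<le> q \<Longrightarrow> l1 \<le> l \<Longrightarrow> l \<le> 2 * (s - 1) \<Longrightarrow> 2 + l1 \<le> 2 * q"
  by (simp add: algebra_simps)

theorem corollary2:
  fixes f :: "'a::{real_inner, complete_space} \<Rightarrow> real"
    and grad :: "'a \<Rightarrow> 'a"
    and x d :: "nat \<Rightarrow> 'a"
    and \<alpha> :: "nat \<Rightarrow> real"
    and lk :: "nat \<Rightarrow> nat"
    and nu :: "nat \<Rightarrow> nat \<Rightarrow> real"
    and \<alpha>0 \<beta> \<rho> L flow c1 c2 :: real
  assumes deriv: "\<And>z. (f has_derivative (\<lambda>h. inner (grad z) h)) (at z)"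
    and \<alpha>0: "\<alpha>0 > 0" and \<beta>: "0 < \<beta>" "\<beta> < 1" and \<rho>: "0 < \<rho>" "\<rho> < 1"
    and alpha_init: "\<alpha> 0 = \<alpha>0"
    and descent: "\<And>k. inner (grad (x k)) (d k) < 0"
    and nu_nonneg: "\<And>k l. nu k l \<ge> 0"
    and accept: "\<And>k. f (x k + (\<alpha> k * \<beta> ^ lk k) *\<^sub>R d k)
                   \<le> f (x k) + \<rho> * \<alpha> k * \<beta> ^ lk k * inner (grad (x k)) (d k) + nu k (lk k)"
    and first: "\<And>k l. l < lk k \<Longrightarrow> \<not> (f (x k + (\<alpha> k * \<beta> ^ l) *\<^sub>R d k)
                   \<le> f (x k) + \<rho> * \<alpha> k * \<beta> ^ l * inner (grad (x k)) (d k) + nu k l)"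
    and x_step: "\<And>k. x (Suc k) = x k + (\<alpha> k * \<beta> ^ lk k) *\<^sub>R d k"
    and alpha_step: "\<And>k. \<alpha> (Suc k) = \<alpha> k * \<beta> powi (int (lk k) - 1)"
    and A1: "L > 0" "\<And>u v. norm (grad u - grad v) \<le> L * norm (u - v)"
    and A2: "\<And>z. f z \<ge> flow"
    and A3: "c1 > 0" "c2 > 0"
       "\<And>k. inner (grad (x k)) (d k) \<le> - c1 * (norm (grad (x k)))^2"
       "\<And>k. norm (d k) \<le> c2 * norm (grad (x k))"
  shows
    "(\<forall>C k0 \<epsilon> T \<delta>.
        (\<lambda>k. nu k (lk k)) \<longlonglongrightarrow> 0 \<longrightarrow>
        C > 0 \<longrightarrow> (\<forall>k. nu k (lk k) \<le> C) \<longrightarrow>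
        (\<forall>\<delta>'>0. k0 \<delta>' \<ge> (1::nat) \<and> (\<forall>k\<ge>k0 \<delta>'. nu k (lk k) \<le> \<delta>')) \<longrightarrow>
        \<epsilon> > 0 \<longrightarrow> \<delta> = kappa_c \<rho> \<beta> \<alpha>0 c1 c2 L * \<epsilon>^2 / 2 \<longrightarrow>
        T \<ge> (1::nat) \<longrightarrow>
        real T \<ge> Max {2 * real (k0 (\<delta>/2)) * C / \<delta>, 1 + real (k0 (\<delta>/2)),
                       2 * (f (x 0) - flow) / (kappa_c \<rho> \<beta> \<alpha>0 c1 c2 L * \<epsilon>^2)} \<longrightarrow>
        (MIN k\<in>{..<T}. norm (grad (x k))) \<le> \<epsilon>)
     \<and>
     (\<forall>M \<epsilon> T.
        M > 0 \<longrightarrow> 0 \<le> nu 0 (lk 0) \<longrightarrow> nu 0 (lk 0) \<le> M \<longrightarrow>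
        (\<forall>k\<ge>1. nu k (lk k) = M / real k) \<longrightarrow>
        \<epsilon> > 0 \<longrightarrow> T \<ge> (1::nat) \<longrightarrow>
        real T \<ge> Max {16 * M^2 / ((kappa_c \<rho> \<beta> \<alpha>0 c1 c2 L)^2 * \<epsilon>^4),
                       1 + 4 * M / (kappa_c \<rho> \<beta> \<alpha>0 c1 c2 L * \<epsilon>^2),
                       2 * (f (x 0) - flow) / (kappa_c \<rho> \<beta> \<alpha>0 c1 c2 L * \<epsilon>^2)} \<longrightarrow>
        (MIN k\<in>{..<T}. norm (grad (x k))) \<le> \<epsilon>)"
proof -
  define \<kappa> where "\<kappa> = kappa_c \<rho> \<beta> \<alpha>0 c1 c2 L"
  define m where "m = min (\<beta> * \<alpha>0) (2 * \<beta> * (1 - \<rho>) * c1 / (L * c2^2))"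
  define g where "g k = norm (grad (x k))" for k
  define \<nu> where "\<nu> k = nu k (lk k)" for k
  have mpos: "m > 0" using \<alpha>0 \<beta> \<rho> A1 A3 unfolding m_def by auto
  have km: "\<kappa> = \<rho> * c1 * m"
  proof -
    have "\<rho> * c1 * m = min (\<rho> * c1 * (\<beta> * \<alpha>0)) (\<rho> * c1 * (2 * \<beta> * (1 - \<rho>) * c1 / (L * c2^2)))"
      unfolding m_def using \<rho> A3 by (simp add: min_mult_distrib_left)
    also have "\<dots> = \<kappa>" unfolding \<kappa>_def kappa_c_def by (simp add: power2_eq_square mult_ac)
    finally show ?thesis by simp
  qed
  have kpos: "\<kappa> > 0" using km mpos \<rho> A3 by simp
  have tstep: "\<alpha> k * \<beta> ^ lk k \<ge> m" if ak: "\<alpha> k \<ge> m" for k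
  proof (cases "lk k = 0")
    case True then show ?thesis using ak by simp
  next
    case False
    define l where "l = lk k - 1"
    have lk: "lk k = Suc l" using False l_def by simp
    define s where "s = \<alpha> k * \<beta> ^ l"
    have spos: "s > 0" using ak mpos \<beta> unfolding s_def by simp
    define gd where "gd = inner (grad (x k)) (d k)"
    have gdneg: "gd < 0" using descent unfolding gd_def by simp
    have fail: "f (x k + s *\<^sub>R d k) > f (x k) + \<rho> * s * gd + nu k l"
      using first[of l k] lk unfolding s_def gd_def by auto
    have desc: "f (x k + s *\<^sub>R d k) \<le> f (x k) + s * gd + L/2 * s^2 * (norm (d k))^2"
      unfolding gd_def by (rule descent_lemma[OF deriv A1(2)]) (use spos in simp)
    have "\<rho> * s * gd < s * gd + L/2 * s^2 * (norm (d k))^2"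
      using fail desc nu_nonneg[of k l] by linarith
    hence "s * ((1 - \<rho>) * (- gd)) < s * (L/2 * s * (norm (d k))^2)"
      by (simp add: algebra_simps power2_eq_square)
    hence 1: "(1 - \<rho>) * (- gd) < L/2 * s * (norm (d k))^2"
      using spos mult_less_cancel_left_pos by blast
    have gpos: "g k > 0" using gdneg unfolding g_def gd_def by (cases "grad (x k) = 0") auto
    have "(1 - \<rho>) * (c1 * (g k)^2) \<le> (1 - \<rho>) * (- gd)"
      using A3(3)[of k] \<rho> unfolding g_def gd_def by (intro mult_left_mono) auto
    also note 1
    also have "L/2 * s * (norm (d k))^2 \<le> L/2 * s * (c2 * g k)^2"
      using A3(4)[of k] A1 spos unfolding g_def by (intro mult_left_mono power_mono) auto
    finally have "((1 - \<rho>) * c1) * (g k)^2 < (L/2 * s * c2^2) * (g k)^2"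
      by (simp add: power_mult_distrib mult_ac)
    hence "(1 - \<rho>) * c1 < L/2 * s * c2^2" using gpos
      by (simp add: mult_less_cancel_right)
    hence "2 * (1 - \<rho>) * c1 / (L * c2^2) < s"
      using A1 A3 by (simp add: divide_less_eq algebra_simps)
    hence "\<beta> * (2 * (1 - \<rho>) * c1 / (L * c2^2)) < \<beta> * s"
      using \<beta> by (intro mult_strict_left_mono) auto
    moreover have "\<beta> * (2 * (1 - \<rho>) * c1 / (L * c2^2)) = 2 * \<beta> * (1 - \<rho>) * c1 / (L * c2^2)"
      by simp
    ultimately have "2 * \<beta> * (1 - \<rho>) * c1 / (L * c2^2) < \<beta> * s" by linarith
    moreover have "\<beta> * s = \<alpha> k * \<beta> ^ lk k" unfolding s_def lk by simp
    ultimately show ?thesis unfolding m_def by linarith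
  qed
  have am: "\<alpha> k \<ge> m" for k
  proof (induction k)
    case 0 show ?case using alpha_init \<alpha>0 \<beta> unfolding m_def by (simp add: min_le_iff_disj)
  next
    case (Suc k)
    have t: "\<alpha> k * \<beta> ^ lk k \<ge> m" by (rule tstep[OF Suc])
    have "\<beta> powi (int (lk k) - 1) = \<beta> ^ lk k / \<beta>"
      using \<beta> by (simp add: power_int_diff)
    hence "\<alpha> (Suc k) = (\<alpha> k * \<beta> ^ lk k) / \<beta>" using alpha_step[of k] by simp
    moreover have "(\<alpha> k * \<beta> ^ lk k) \<le> (\<alpha> k * \<beta> ^ lk k) / \<beta>"
      using \<beta> t mpos mult_left_le[of \<beta> "\<alpha> k * \<beta> ^ lk k"] by (simp add: le_divide_eq)
    ultimately show ?case using t by simp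
  qed
  have dec: "f (x (Suc k)) \<le> f (x k) - \<kappa> * (g k)^2 + \<nu> k" for k
  proof -
    have t: "\<alpha> k * \<beta> ^ lk k \<ge> m" by (rule tstep[OF am])
    have tp: "\<rho> * (\<alpha> k * \<beta> ^ lk k) \<ge> 0" using t mpos \<rho> by simp
    have "\<rho> * \<alpha> k * \<beta> ^ lk k * inner (grad (x k)) (d k) = \<rho> * (\<alpha> k * \<beta> ^ lk k) * inner (grad (x k)) (d k)"
      by (simp add: mult.assoc)
    also have "\<dots> \<le> \<rho> * (\<alpha> k * \<beta> ^ lk k) * (- c1 * (g k)^2)"
      unfolding g_def by (rule mult_left_mono[OF A3(3) tp])
    also have "\<dots> \<le> \<rho> * m * (- c1 * (g k)^2)"
      using t \<rho> A3 by (intro mult_right_mono_neg mult_left_mono) auto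
    also have "\<dots> = - \<kappa> * (g k)^2" using km by simp
    finally show ?thesis using accept[of k] x_step[of k] unfolding \<nu>_def by simp
  qed
  have sumdec: "f (x T) \<le> f (x 0) - (\<Sum>k<T. \<kappa> * (g k)^2) + (\<Sum>k<T. \<nu> k)" for T
  proof (induction T)
    case 0 then show ?case by simp
  next
    case (Suc T) then show ?case using dec[of T] by simp
  qed
  have key: "(MIN k\<in>{..<T}. norm (grad (x k))) \<le> \<epsilon>"
    if T1: "T \<ge> 1" and e: "\<epsilon> > 0" and S: "(\<Sum>k<T. \<nu> k) \<le> real T * \<kappa> * \<epsilon>^2 / 2"
      and F: "f (x 0) - flow \<le> real T * \<kappa> * \<epsilon>^2 / 2" for T \<epsilon>
  proof (rule ccontr)
    assume "\<not> ?thesis"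
    hence "\<epsilon> < (MIN k\<in>{..<T}. norm (grad (x k)))" by simp
    hence "\<forall>k\<in>{..<T}. \<epsilon> < g k"
    proof (intro ballI)
      fix k assume emin: "\<epsilon> < (MIN k\<in>{..<T}. norm (grad (x k)))" and k: "k \<in> {..<T}"
      hence "(MIN k\<in>{..<T}. norm (grad (x k))) \<le> norm (grad (x k))" by (intro Min_le) auto
      with emin show "\<epsilon> < g k" unfolding g_def by linarith
    qed
    hence "\<forall>k\<in>{..<T}. \<kappa> * \<epsilon>^2 < \<kappa> * (g k)^2"
      using e kpos by (auto intro!: power_strict_mono)
    hence "(\<Sum>k<T. \<kappa> * \<epsilon>^2) < (\<Sum>k<T. \<kappa> * (g k)^2)"
      using T1 by (intro sum_strict_mono) (auto simp: lessThan_empty_iff)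
    hence "real T * \<kappa> * \<epsilon>^2 < (\<Sum>k<T. \<kappa> * (g k)^2)" by simp
    moreover have "flow \<le> f (x T)" by (rule A2)
    ultimately show False using sumdec[of T] S F by linarith
  qed
  show ?thesis
  proof (intro conjI allI impI)
    fix C k0 \<epsilon> T \<delta>
    assume C: "C > 0" and Cb: "\<forall>k. nu k (lk k) \<le> C"
      and k0: "\<forall>\<delta>'>0. k0 \<delta>' \<ge> (1::nat) \<and> (\<forall>k\<ge>k0 \<delta>'. nu k (lk k) \<le> \<delta>')"
      and e: "\<epsilon> > 0" and dl: "\<delta> = kappa_c \<rho> \<beta> \<alpha>0 c1 c2 L * \<epsilon>^2 / 2"
      and T1: "T \<ge> (1::nat)"
      and TM: "real T \<ge> Max {2 * real (k0 (\<delta>/2)) * C / \<delta>, 1 + real (k0 (\<delta>/2)),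
                       2 * (f (x 0) - flow) / (kappa_c \<rho> \<beta> \<alpha>0 c1 c2 L * \<epsilon>^2)}"
    define K where "K = k0 (\<delta>/2)"
    have dpos: "\<delta> > 0" using kpos e unfolding dl \<kappa>_def[symmetric] by simp
    have Kb: "\<forall>k\<ge>K. \<nu> k \<le> \<delta>/2" using k0[rule_format, of "\<delta>/2"] dpos unfolding K_def \<nu>_def by simp
    have T_1: "2 * real K * C / \<delta> \<le> real T" and T_2: "1 + real K \<le> real T"
      and T_3: "2 * (f (x 0) - flow) / (\<kappa> * \<epsilon>^2) \<le> real T"
      using TM unfolding K_def \<kappa>_def by auto
    have KT: "K \<le> T" using T_2 by simp
    have s1: "(\<Sum>k<K. \<nu> k) \<le> real K * C"
      using sum_mono[of "{..<K}" \<nu> "\<lambda>_. C"] Cb unfolding \<nu>_def by simp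
    have s2: "(\<Sum>k\<in>{K..<T}. \<nu> k) \<le> real (T - K) * (\<delta>/2)"
      using sum_mono[of "{K..<T}" \<nu> "\<lambda>_. \<delta>/2"] Kb by simp
    have split: "(\<Sum>k<T. \<nu> k) = (\<Sum>k<K. \<nu> k) + (\<Sum>k\<in>{K..<T}. \<nu> k)"
      using KT by (simp add: lessThan_atLeast0 sum.atLeastLessThan_concat)
    have "real K * C \<le> real T * \<delta> / 2" using T_1 dpos by (simp add: divide_le_eq mult_ac)
    moreover have "real (T - K) * (\<delta>/2) \<le> real T * (\<delta>/2)" using dpos by (intro mult_right_mono) auto
    ultimately have "(\<Sum>k<T. \<nu> k) \<le> real T * \<kappa> * \<epsilon>^2 / 2"
      using split s1 s2 dl unfolding \<kappa>_def by (simp add: field_simps)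
    moreover have "f (x 0) - flow \<le> real T * \<kappa> * \<epsilon>^2 / 2"
      using T_3 kpos e by (simp add: divide_le_eq mult_ac)
    ultimately show "(MIN k\<in>{..<T}. norm (grad (x k))) \<le> \<epsilon>" using key T1 e by blast
  next
    fix M \<epsilon> T
    assume M: "M > 0" and n0: "0 \<le> nu 0 (lk 0)" "nu 0 (lk 0) \<le> M"
      and nk: "\<forall>k\<ge>1. nu k (lk k) = M / real k"
      and e: "\<epsilon> > 0" and T1: "T \<ge> (1::nat)"
      and TM: "real T \<ge> Max {16 * M^2 / ((kappa_c \<rho> \<beta> \<alpha>0 c1 c2 L)^2 * \<epsilon>^4),
                       1 + 4 * M / (kappa_c \<rho> \<beta> \<alpha>0 c1 c2 L * \<epsilon>^2),
                       2 * (f (x 0) - flow) / (kappa_c \<rho> \<beta> \<alpha>0 c1 c2 L * \<epsilon>^2)}"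
    define a where "a = 4 * M / (\<kappa> * \<epsilon>^2)"
    have apos: "a > 0" using M kpos e unfolding a_def by simp
    have "a^2 = 16 * M^2 / (\<kappa>^2 * \<epsilon>^4)" unfolding a_def by (simp add: power_divide power_mult_distrib flip: power_mult)
    hence T_1: "a^2 \<le> real T" and T_2: "1 + a \<le> real T"
      and T_3: "2 * (f (x 0) - flow) / (\<kappa> * \<epsilon>^2) \<le> real T"
      using TM unfolding a_def \<kappa>_def by auto
    have T2: "T \<ge> 2" using T_2 apos by simp
    have harm: "(\<Sum>k<n. \<nu> k) \<le> M * (2 + ln (real n - 1))" if "n \<ge> 2" for n
      using that
    proof (induction n rule: nat_induct_at_least)
      case base
      have "(\<Sum>k<2. \<nu> k) = \<nu> 0 + \<nu> 1" by (simp add: numeral_2_eq_2)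
      then show ?case using n0 nk unfolding \<nu>_def by simp
    next
      case (Suc n)
      have "ln (real n - 1) - ln (real n) \<le> (real n - 1) / real n - 1"
        using Suc.hyps ln_le_minus_one[of "(real n - 1) / real n"] by (simp add: ln_div)
      also have "\<dots> = - 1 / real n" using Suc.hyps by (simp add: field_simps)
      finally have h: "1 / real n \<le> ln (real n) - ln (real n - 1)" by simp
      have "M / real n = M * (1 / real n)" by simp
      also have "\<dots> \<le> M * (ln (real n) - ln (real n - 1))"
        using M h by (intro mult_left_mono) auto
      finally have "M / real n \<le> M * (ln (real n) - ln (real n - 1))" .
      moreover have "\<nu> n = M / real n" using nk Suc.hyps unfolding \<nu>_def by simp
      ultimately show ?case using Suc.IH by (simp add: algebra_simps)
    qed
    have l1: "ln (real T - 1) \<le> ln (real T)" using T2 by simp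
    have l2: "ln (real T) \<le> 2 * (sqrt (real T) - 1)"
      using ln_le_minus_one[of "sqrt (real T)"] ln_sqrt[of "real T"] T2 by simp
    have sq: "a \<le> sqrt (real T)" using T_1 apos real_le_rsqrt by blast
    have "sqrt (real T) * a \<le> sqrt (real T) * sqrt (real T)"
      using sq by (intro mult_left_mono) auto
    hence "sqrt (real T) * a \<le> real T" by simp
    hence "sqrt (real T) \<le> real T / a" using apos by (simp add: le_divide_eq)
    hence "2 + ln (real T - 1) \<le> 2 * (real T / a)" using l1 l2 by (rule tri3)
    hence "M * (2 + ln (real T - 1)) \<le> M * (2 * (real T / a))" using M by (intro mult_left_mono) auto
    also have "M * (2 * (real T / a)) = 2 * M * (real T / a)" by (simp only: mult_ac)
    finally have X: "M * (2 + ln (real T - 1)) \<le> 2 * M * (real T / a)" .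
    have "(\<Sum>k<T. \<nu> k) \<le> 2 * M * (real T / a)"
      by (rule order_trans[OF harm[OF T2] X])
    also have "2 * M * (real T / a) = real T * \<kappa> * \<epsilon>^2 / 2"
      unfolding a_def using M by (simp add: field_simps)
    finally have S: "(\<Sum>k<T. \<nu> k) \<le> real T * \<kappa> * \<epsilon>^2 / 2" .
    have "f (x 0) - flow \<le> real T * \<kappa> * \<epsilon>^2 / 2"
      using T_3 kpos e by (simp add: divide_le_eq mult_ac)
    then show "(MIN k\<in>{..<T}. norm (grad (x k))) \<le> \<epsilon>" using key T1 e S by blast
  qed
qed

end
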